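(* Let $\mathcal{E}$ be the coarse structure on $\omega$ with base $\{E_H: H\subseteq S_\omega \text{ finite}, \mathrm{id}\in H\}$, $E_H=\{(x,y):y\in Hx\}$, where $S_\omega$ is the group of all permutations of $\omega$. Then $so(\omega,\mathcal{E})=so(\omega,\mathfrak{M}_\omega)$ and $\delta_{(\omega,\mathcal{E})}=\delta_{(\omega,\mathfrak{M}_\omega)}$, although $\mathcal{E}\neq\mathfrak{M}_\omega$; both balleans have exactly the finite sets as bounded sets.
   Context: A ballean $(X,\mathcal{E})$ is a set with a coarse structure. $E[x]=\{y:(x,y)\in E\}$, $E[A]=\bigcup_{a\in A}E[a]$. $Y$ is bounded if $Y\subseteq E[x]$ for some $x$ and $E\in\mathcal{E}$. $A\,\delta_{(X,\mathcal{E})}\,B$ means there is $E\in\mathcal{E}$ with $A\subseteq E[B]$ and $B\subseteq E[A]$. A function $f:X\to\mathbb{R}$ is slowly oscillating if for every $E\in\mathcal{E}$ and $\varepsilon>0$ there is a bounded $B$ with $\operatorname{diam} f(E[x])<\varepsilon$ for all $x\in X\setminus B$; $so(X,\mathcal{E})$ denotes the set of bounded slowly oscillating functions. $\mathfrak{M}_\omega$ is the coarse structure on $\omega$ with base $\{M_{\mathcal{P}}\}$, where $\mathcal{P}$ ranges over coverings of $\omega$ by finite sets such that for each $x\in\omega$ the set $\bigcup\{P'\in\mathcal{P}:x\in P'\}$ is finite, and $M_{\mathcal{P}}=\{(x,y):x,y\in P\text{ for some }P\in\mathcal{P}\}$. *)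

theory Defs
  imports "HOL-Analysis.Analysis"
begin

text \<open>A ballean is given by its family of entourages ent. E[x] is E `` {x}.\<close>

definition ball_bounded :: "('a \<times> 'a) set set \<Rightarrow> 'a set \<Rightarrow> bool" where
  "ball_bounded ent Y \<longleftrightarrow> (\<exists>x. \<exists>E\<in>ent. Y \<subseteq> E `` {x})"

definition ball_delta :: "('a \<times> 'a) set set \<Rightarrow> 'a set \<Rightarrow> 'a set \<Rightarrow> bool" where
  "ball_delta ent A B \<longleftrightarrow> (\<exists>E\<in>ent. A \<subseteq> E `` B \<and> B \<subseteq> E `` A)"

definition slowly_oscillating :: "('a \<times> 'a) set set \<Rightarrow> ('a \<Rightarrow> real) \<Rightarrow> bool" where
  "slowly_oscillating ent f \<longleftrightarrow>
     (\<forall>E\<in>ent. \<forall>\<epsilon>>0. \<exists>B. ball_bounded ent B \<and>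
        (\<forall>x. x \<notin> B \<longrightarrow> diameter (f ` (E `` {x})) < \<epsilon>))"

definition so :: "('a \<times> 'a) set set \<Rightarrow> ('a \<Rightarrow> real) set" where
  "so ent = {f. bounded (range f) \<and> slowly_oscillating ent f}"

definition E_H :: "(nat \<Rightarrow> nat) set \<Rightarrow> (nat \<times> nat) set" where
  "E_H H = {(x, y). \<exists>h\<in>H. y = h x}"

definition perm_coarse :: "(nat \<times> nat) set set" where
  "perm_coarse = {E. \<exists>H. finite H \<and> id \<in> H \<and> (\<forall>h\<in>H. bij h) \<and> E \<subseteq> E_H H}"

definition admissible_cover :: "nat set set \<Rightarrow> bool" where
  "admissible_cover P \<longleftrightarrow> \<Union>P = UNIV \<and> (\<forall>p\<in>P. finite p) \<and>
     (\<forall>x. finite (\<Union>{p\<in>P. x \<in> p}))"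

definition M_P :: "nat set set \<Rightarrow> (nat \<times> nat) set" where
  "M_P P = {(x, y). \<exists>p\<in>P. x \<in> p \<and> y \<in> p}"

definition M_omega :: "(nat \<times> nat) set set" where
  "M_omega = {E. \<exists>P. admissible_cover P \<and> E \<subseteq> M_P P}"

end

theory Submission
  imports Defs "HOL-Library.Infinite_Set"
begin

definition sw :: "nat set \<Rightarrow> nat set \<Rightarrow> (nat \<Rightarrow> nat) \<Rightarrow> nat \<Rightarrow> nat" where
  "sw U V g x = (if x \<in> U then g x else if x \<in> V then inv_into U g x else x)"

lemma sw_invol:
  assumes "bij_betw g U V" "U \<inter> V = {}"
  shows "sw U V g (sw U V g x) = x"
proof -
  have i: "inj_on g U" and im: "g ` U = V" using assms(1) by (auto simp: bij_betw_def)
  show ?thesis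
  proof (cases "x \<in> U")
    case True
    then have "g x \<in> V" "g x \<notin> U" using im assms(2) by auto
    then show ?thesis using True i by (simp add: sw_def)
  next
    case False
    note F = False
    show ?thesis
    proof (cases "x \<in> V")
      case True
      then have "inv_into U g x \<in> U" using im by (metis inv_into_into)
      moreover have "g (inv_into U g x) = x" using True im by (simp add: f_inv_into_f)
      ultimately show ?thesis using F True by (simp add: sw_def)
    next
      case False
      then show ?thesis using F by (simp add: sw_def)
    qed
  qed
qed

lemma sw_bij:
  assumes "bij_betw g U V" "U \<inter> V = {}"
  shows "bij (sw U V g)"
  by (rule o_bij[of "sw U V g"]) (auto simp: sw_invol[OF assms])

lemma sw_U: "x \<in> U \<Longrightarrow> sw U V g x = g x" by (simp add: sw_def)

lemma E_H_img: "E_H H `` {x} = (\<lambda>h. h x) ` H"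
  by (auto simp: E_H_def)

lemma perm_ball_finite:
  assumes "E \<in> perm_coarse" shows "finite (E `` {x})"
proof -
  obtain H where "finite H" "E \<subseteq> E_H H" using assms by (auto simp: perm_coarse_def)
  then show ?thesis using E_H_img[of H x] by (metis Image_mono finite_imageI finite_subset order_refl)
qed

lemma MP_img: "M_P P `` {x} = \<Union>{p\<in>P. x \<in> p}"
  by (auto simp: M_P_def)

lemma M_ball_finite:
  assumes "E \<in> M_omega" shows "finite (E `` {x})"
proof -
  obtain P where "admissible_cover P" "E \<subseteq> M_P P" using assms by (auto simp: M_omega_def)
  then show ?thesis using MP_img[of P x] unfolding admissible_cover_def
    by (metis Image_mono finite_subset order_refl)
qed

lemma perm_bounded: "ball_bounded perm_coarse Y \<longleftrightarrow> finite Y"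
proof
  assume "ball_bounded perm_coarse Y"
  then show "finite Y" using perm_ball_finite unfolding ball_bounded_def
    by (meson finite_subset)
next
  assume fY: "finite Y"
  define H where "H = insert id ((\<lambda>y. sw {0} {y} (\<lambda>_. y)) ` (Y - {0}))"
  have "finite H" using fY by (simp add: H_def)
  moreover have "id \<in> H" by (simp add: H_def)
  moreover have "\<forall>h\<in>H. bij h"
  proof
    fix h assume "h \<in> H"
    then show "bij h" unfolding H_def
    proof
      assume "h \<in> (\<lambda>y. sw {0} {y} (\<lambda>_. y)) ` (Y - {0})"
      then obtain y where "y \<noteq> 0" "h = sw {0} {y} (\<lambda>_. y)" by auto
      moreover have "bij (sw {0} {y} (\<lambda>_. y))" using \<open>y \<noteq> 0\<close> by (intro sw_bij) (auto simp: bij_betw_def)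
      ultimately show "bij h" by simp
    qed simp
  qed
  ultimately have "E_H H \<in> perm_coarse" by (auto simp: perm_coarse_def)
  moreover have "Y \<subseteq> E_H H `` {0}"
  proof
    fix y assume "y \<in> Y"
    show "y \<in> E_H H `` {0}"
    proof (cases "y = 0")
      case True then show ?thesis by (auto simp: E_H_def H_def)
    next
      case False
      then have "sw {0} {y} (\<lambda>_. y) \<in> H" using \<open>y \<in> Y\<close> by (auto simp: H_def)
      moreover have "sw {0} {y} (\<lambda>_. y) 0 = y" by (simp add: sw_def)
      ultimately show ?thesis unfolding E_H_img by (metis image_eqI)
    qed
  qed
  ultimately show "ball_bounded perm_coarse Y" unfolding ball_bounded_def by blast
qed

lemma M_bounded: "ball_bounded M_omega Y \<longleftrightarrow> finite Y"
proof
  assume "ball_bounded M_omega Y"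
  then show "finite Y" using M_ball_finite unfolding ball_bounded_def
    by (meson finite_subset)
next
  assume fY: "finite Y"
  define P where "P = insert (insert 0 Y) (range (\<lambda>n. {n}))"
  have "admissible_cover P"
    unfolding admissible_cover_def
  proof (intro conjI allI ballI)
    show "\<Union> P = UNIV" by (auto simp: P_def)
    show "finite p" if "p \<in> P" for p using that fY by (auto simp: P_def)
    fix x
    have "\<Union>{p\<in>P. x \<in> p} \<subseteq> insert x (insert 0 Y)" by (auto simp: P_def)
    then show "finite (\<Union>{p\<in>P. x \<in> p})" using fY by (meson finite_insert finite_subset)
  qed
  then have "M_P P \<in> M_omega" by (auto simp: M_omega_def)
  moreover have "Y \<subseteq> M_P P `` {0}" by (auto simp: M_P_def P_def)
  ultimately show "ball_bounded M_omega Y" unfolding ball_bounded_def by blast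
qed

lemma perm_sub_M: "perm_coarse \<subseteq> M_omega"
proof
  fix E assume "E \<in> perm_coarse"
  then obtain H where H: "finite H" "id \<in> H" "\<forall>h\<in>H. bij h" "E \<subseteq> E_H H"
    by (auto simp: perm_coarse_def)
  define P where "P = range (\<lambda>x. (\<lambda>h. h x) ` H)"
  have "admissible_cover P"
    unfolding admissible_cover_def
  proof (intro conjI allI ballI)
    show "\<Union> P = UNIV"
    proof -
      have "x \<in> (\<lambda>h. h x) ` H" for x using H(2) by (metis id_apply image_eqI)
      then show ?thesis by (auto simp: P_def)
    qed
    show "finite p" if "p \<in> P" for p using that H(1) by (auto simp: P_def)
    fix x
    have "{p\<in>P. x \<in> p} \<subseteq> (\<lambda>g. (\<lambda>h. h (inv g x)) ` H) ` H"
    proof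
      fix p assume "p \<in> {p\<in>P. x \<in> p}"
      then obtain y h where p: "p = (\<lambda>h. h y) ` H" and hH: "h \<in> H" and "x = h y"
        by (auto simp: P_def)
      then have "y = inv h x" using H(3) by (metis bij_inv_eq_iff)
      then show "p \<in> (\<lambda>g. (\<lambda>h. h (inv g x)) ` H) ` H" using p hH by blast
    qed
    then have "finite {p\<in>P. x \<in> p}" using H(1) by (meson finite_imageI finite_subset)
    moreover have "\<forall>p\<in>{p\<in>P. x \<in> p}. finite p" using H(1) by (auto simp: P_def)
    ultimately show "finite (\<Union>{p\<in>P. x \<in> p})" by blast
  qed
  moreover have "E_H H \<subseteq> M_P P"
  proof
    fix z assume "z \<in> E_H H"
    then obtain x h where z: "z = (x, h x)" "h \<in> H" by (auto simp: E_H_def)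
    have "x \<in> (\<lambda>h. h x) ` H" using H(2) by (metis id_apply image_eqI)
    moreover have "h x \<in> (\<lambda>h. h x) ` H" using z by blast
    ultimately show "z \<in> M_P P" unfolding M_P_def P_def using z by blast
  qed
  ultimately show "E \<in> M_omega" using H(4) by (auto simp: M_omega_def)
qed

lemma perm_neq_M: "perm_coarse \<noteq> M_omega"
proof
  assume eq: "perm_coarse = M_omega"
  define P where "P = range (\<lambda>k::nat. {k..2*k})"
  have "admissible_cover P"
    unfolding admissible_cover_def
  proof (intro conjI allI ballI)
    show "\<Union> P = UNIV" by (force simp: P_def)
    show "finite p" if "p \<in> P" for p using that by (auto simp: P_def)
    fix x
    have "\<Union>{p\<in>P. x \<in> p} \<subseteq> {..2*x}" by (auto simp: P_def)
    then show "finite (\<Union>{p\<in>P. x \<in> p})" by (meson finite_atMost finite_subset)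
  qed
  then have "M_P P \<in> perm_coarse" using eq by (auto simp: M_omega_def)
  then obtain H where H: "finite H" "M_P P \<subseteq> E_H H" by (auto simp: perm_coarse_def)
  define k where "k = card H"
  have "{k..2*k} \<subseteq> M_P P `` {k}" by (auto simp: M_P_def P_def)
  also have "\<dots> \<subseteq> (\<lambda>h. h k) ` H" using H(2) E_H_img[of H k] by blast
  finally have "card {k..2*k} \<le> card ((\<lambda>h. h k) ` H)" using H(1) by (meson card_mono finite_imageI)
  also have "\<dots> \<le> k" unfolding k_def by (rule card_image_le[OF H(1)])
  finally show False by simp
qed

lemma so_M_sub: "so M_omega \<subseteq> so perm_coarse"
  unfolding so_def slowly_oscillating_def using perm_sub_M perm_bounded M_bounded by blast

lemma conv_so_M:
  assumes b: "bounded (range f)" and c: "convergent f"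
  shows "f \<in> so M_omega"
  unfolding so_def slowly_oscillating_def
proof (intro CollectI conjI b ballI allI impI)
  fix E and e :: real assume "E \<in> M_omega" "e > 0"
  then obtain P where P: "admissible_cover P" "E \<subseteq> M_P P" by (auto simp: M_omega_def)
  obtain L where "f \<longlonglongrightarrow> L" using c by (auto simp: convergent_def)
  moreover have "e/3 > 0" using \<open>e > 0\<close> by simp
  ultimately obtain N where N0: "\<forall>n\<ge>N. norm (f n - L) < e/3" using LIMSEQ_D by blast
  have N: "\<And>n. n \<ge> N \<Longrightarrow> dist (f n) L < e/3" using N0 by (simp add: dist_norm)
  define B where "B = (\<Union>w<N. \<Union>{p\<in>P. w \<in> p})"
  have "finite B" unfolding B_def using P(1) by (auto simp: admissible_cover_def)
  moreover have "diameter (f ` (E `` {x})) < e" if "x \<notin> B" for x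
  proof -
    have y: "dist (f y) L < e/3" if "y \<in> E `` {x}" for y
    proof -
      have "(x, y) \<in> M_P P" using that P(2) by blast
      then obtain p where "p \<in> P" "x \<in> p" "y \<in> p" by (auto simp: M_P_def)
      then have "\<not> y < N" using \<open>x \<notin> B\<close> unfolding B_def by blast
      then show ?thesis using N by simp
    qed
    have "diameter (f ` (E `` {x})) \<le> 2*e/3"
    proof (rule diameter_le)
      show "f ` (E `` {x}) \<noteq> {} \<or> 0 \<le> 2*e/3" using \<open>e>0\<close> by simp
      fix a b assume "a \<in> f ` (E `` {x})" "b \<in> f ` (E `` {x})"
      then have "dist a L < e/3" "dist b L < e/3" using y by auto
      then show "norm (a - b) \<le> 2*e/3" by (simp add: dist_real_def abs_if split: if_splits)
    qed
    then show ?thesis using \<open>e>0\<close> by simp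
  qed
  ultimately show "\<exists>B. ball_bounded M_omega B \<and> (\<forall>x. x \<notin> B \<longrightarrow> diameter (f ` (E `` {x})) < e)"
    using M_bounded by blast
qed

lemma disj_bij:
  assumes "infinite (U::nat set)" "infinite (V::nat set)"
  shows "\<exists>g. bij_betw g U V"
proof -
  have "bij_betw (enumerate U) UNIV U" "bij_betw (enumerate V) UNIV V"
    using assms bij_enumerate by blast+
  then have "bij_betw (enumerate V \<circ> inv_into UNIV (enumerate U)) U V"
    by (meson bij_betw_inv_into bij_betw_trans)
  then show ?thesis by blast
qed

lemma so_perm_conv:
  assumes "f \<in> so perm_coarse"
  shows "convergent f"
proof -
  have b: "bounded (range f)" and so: "slowly_oscillating perm_coarse f"
    using assms by (auto simp: so_def)
  obtain r where r: "strict_mono r" "monoseq (\<lambda>n. f (r n))" using seq_monosub by blast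
  have "bounded (range (f \<circ> r))" using b by (rule bounded_subset) auto
  then have "Bseq (\<lambda>n. f (r n))" using Bseq_eq_bounded[of "f \<circ> r"] by (simp add: comp_def)
  then have "convergent (\<lambda>n. f (r n))" using r(2) Bseq_monoseq_convergent by blast
  then have "convergent (f \<circ> r)" by (simp add: comp_def)
  then obtain L where L: "(f \<circ> r) \<longlonglongrightarrow> L" by (auto simp: convergent_def)
  show ?thesis
  proof (rule ccontr)
    assume nc: "\<not> convergent f"
    then have "\<not> f \<longlonglongrightarrow> L" by (auto simp: convergent_def)
    then obtain e :: real where e: "e > 0" "\<not> (\<forall>\<^sub>F n in sequentially. dist (f n) L < e)"
      using tendsto_iff by blast
    define W where "W = {n. \<not> dist (f n) L < e}"
    have "frequently (\<lambda>n. \<not> dist (f n) L < e) sequentially" using e(2) by (simp add: not_eventually)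
    then have iW: "infinite W" unfolding W_def cofinite_eq_sequentially[symmetric] frequently_cofinite .
    define U where "U = {n. dist (f n) L < e/3}"
    have "e/3 > 0" using e(1) by simp
    then have "\<forall>\<^sub>F n in sequentially. dist ((f \<circ> r) n) L < e/3" using L tendsto_iff by blast
    then obtain N where N: "\<And>n. n \<ge> N \<Longrightarrow> r n \<in> U" unfolding U_def eventually_sequentially by auto
    have "r ` {N..} \<subseteq> U" using N by auto
    moreover have "inj_on r {N..}" using strict_mono_imp_inj_on[OF r(1)] inj_on_subset by blast
    then have "infinite (r ` {N..})" using finite_imageD infinite_Ici by blast
    ultimately have iU: "infinite U" using finite_subset by blast
    have disj: "W \<inter> U = {}" using e(1) by (auto simp: W_def U_def)
    obtain g where g: "bij_betw g W U" using disj_bij iW iU by blast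
    define h where "h = sw W U g"
    have "bij h" unfolding h_def using sw_bij g disj by blast
    then have "E_H {id, h} \<in> perm_coarse" unfolding perm_coarse_def
      by (intro CollectI exI[of _ "{id, h}"]) auto
    then obtain B where B: "ball_bounded perm_coarse B" "\<And>x. x \<notin> B \<Longrightarrow> diameter (f ` (E_H {id, h} `` {x})) < 2*e/3"
    proof -
      have "2*e/3 > 0" using e(1) by simp
      then show ?thesis using so \<open>E_H {id, h} \<in> perm_coarse\<close> that unfolding slowly_oscillating_def by blast
    qed
    have "finite B" using B(1) perm_bounded by blast
    then have "\<not> W \<subseteq> B" using iW finite_subset by blast
    then obtain x where x: "x \<in> W" "x \<notin> B" by blast
    have hx: "h x \<in> U" unfolding h_def using sw_U[OF x(1)] g x(1) by (metis bij_betwE)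
    have S: "f ` (E_H {id, h} `` {x}) = {f x, f (h x)}" by (auto simp: E_H_img)
    have "dist (f x) (f (h x)) \<le> diameter {f x, f (h x)}"
      by (rule diameter_bounded_bound) auto
    moreover have "dist (f x) L \<ge> e" "dist (f (h x)) L < e/3" using x hx by (auto simp: W_def U_def)
    then have "dist (f x) (f (h x)) > 2*e/3" by (simp add: dist_real_def abs_if split: if_splits)
    ultimately show False using B(2)[OF x(2)] S by simp
  qed
qed

lemma so_eq: "so perm_coarse = so M_omega"
proof
  show "so perm_coarse \<subseteq> so M_omega"
    using so_perm_conv conv_so_M by (auto simp: so_def)
qed (rule so_M_sub)

lemma E_H_mono: "H \<subseteq> H' \<Longrightarrow> E_H H \<subseteq> E_H H'"
  by (auto simp: E_H_def)

lemma cover_fin: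
  assumes "finite A" "b0 \<in> B"
  shows "\<exists>H. finite H \<and> id \<in> H \<and> (\<forall>h\<in>H. bij h) \<and> A \<subseteq> E_H H `` B"
proof -
  define H where "H = insert id ((\<lambda>a. sw {b0} {a} (\<lambda>_. a)) ` (A - {b0}))"
  have "finite H" using assms(1) by (simp add: H_def)
  moreover have "id \<in> H" by (simp add: H_def)
  moreover have "\<forall>h\<in>H. bij h"
  proof
    fix h assume "h \<in> H"
    then show "bij h" unfolding H_def
    proof
      assume "h \<in> (\<lambda>a. sw {b0} {a} (\<lambda>_. a)) ` (A - {b0})"
      then obtain a where "a \<noteq> b0" "h = sw {b0} {a} (\<lambda>_. a)" by auto
      moreover have "bij (sw {b0} {a} (\<lambda>_. a))" using \<open>a \<noteq> b0\<close> by (intro sw_bij) (auto simp: bij_betw_def)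
      ultimately show "bij h" by simp
    qed simp
  qed
  moreover have "A \<subseteq> E_H H `` B"
  proof
    fix a assume "a \<in> A"
    show "a \<in> E_H H `` B"
    proof (cases "a = b0")
      case True then show ?thesis using assms(2) by (auto simp: E_H_def H_def)
    next
      case False
      then have "sw {b0} {a} (\<lambda>_. a) \<in> H" using \<open>a \<in> A\<close> by (auto simp: H_def)
      moreover have "sw {b0} {a} (\<lambda>_. a) b0 = a" by (simp add: sw_def)
      ultimately have "(b0, a) \<in> E_H H" unfolding E_H_def by (metis (mono_tags, lifting) case_prodI mem_Collect_eq)
      then show ?thesis using assms(2) by blast
    qed
  qed
  ultimately show ?thesis by blast
qed

lemma cover_inf:
  assumes "infinite (B::nat set)"
  shows "\<exists>H. finite H \<and> id \<in> H \<and> (\<forall>h\<in>H. bij h) \<and> A \<subseteq> E_H H `` B"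
proof -
  define C where "C = A - B"
  have "\<exists>V g. V \<subseteq> B \<and> bij_betw g C V"
  proof (cases "finite C")
    case True
    then obtain V where "finite V" "card V = card C" "V \<subseteq> B"
      using infinite_arbitrarily_large[OF assms] by blast
    moreover obtain g where "bij_betw g C V" using finite_same_card_bij[OF True \<open>finite V\<close>] \<open>card V = card C\<close> by metis
    ultimately show ?thesis by blast
  next
    case False
    then show ?thesis using disj_bij assms by blast
  qed
  then obtain V g where V: "V \<subseteq> B" "bij_betw g C V" by blast
  have disj: "C \<inter> V = {}" using V(1) by (auto simp: C_def)
  define h where "h = sw C V g"
  have "bij h" unfolding h_def using sw_bij V(2) disj by blast
  moreover have "A \<subseteq> E_H {id, h} `` B"
  proof
    fix a assume "a \<in> A"
    show "a \<in> E_H {id, h} `` B"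
    proof (cases "a \<in> B")
      case True then show ?thesis by (auto simp: E_H_def)
    next
      case False
      then have aC: "a \<in> C" using \<open>a \<in> A\<close> by (simp add: C_def)
      have "g a \<in> V" using bij_betwE[OF V(2)] aC by blast
      then have "h a \<in> B" unfolding h_def using sw_U[OF aC] V(1) by auto
      moreover have "h (h a) = a" unfolding h_def using sw_invol V(2) disj by blast
      ultimately have "(h a, a) \<in> E_H {id, h}" unfolding E_H_def by auto
      then show ?thesis using \<open>h a \<in> B\<close> by blast
    qed
  qed
  ultimately show ?thesis by (intro exI[of _ "{id, h}"]) auto
qed

lemma M_image_finite:
  assumes "E \<in> M_omega" "finite B" shows "finite (E `` B)"
proof -
  have "E `` B = (\<Union>b\<in>B. E `` {b})" by auto
  then show ?thesis using assms M_ball_finite by simp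
qed

lemma delta_M_perm:
  assumes "ball_delta M_omega A B" shows "ball_delta perm_coarse A B"
proof -
  obtain E where E: "E \<in> M_omega" "A \<subseteq> E `` B" "B \<subseteq> E `` A"
    using assms by (auto simp: ball_delta_def)
  have c: "\<exists>H. finite H \<and> id \<in> H \<and> (\<forall>h\<in>H. bij h) \<and> X \<subseteq> E_H H `` Y"
    if hyp: "(finite X \<and> Y \<noteq> {}) \<or> infinite Y" for X Y :: "nat set"
  proof (cases "infinite Y")
    case True then show ?thesis using cover_inf by blast
  next
    case False
    then obtain y where "y \<in> Y" using hyp by blast
    then show ?thesis using cover_fin[of X y Y] hyp False by blast
  qed
  show ?thesis
  proof (cases "A = {} \<and> B = {}")
    case True
    then have "E_H {id} \<in> perm_coarse" unfolding perm_coarse_def by (intro CollectI exI[of _ "{id}"]) auto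
    then show ?thesis using True by (auto simp: ball_delta_def)
  next
    case False
    then have ne: "A \<noteq> {}" "B \<noteq> {}" using E by auto
    have fB: "finite A" if "finite B"
      using M_image_finite[OF E(1) that] E(2) finite_subset by blast
    have fA: "finite B" if "finite A"
      using M_image_finite[OF E(1) that] E(3) finite_subset by blast
    have "(finite A \<and> B \<noteq> {}) \<or> infinite B" using ne fB by blast
    then obtain H1 where H1: "finite H1" "id \<in> H1" "\<forall>h\<in>H1. bij h" "A \<subseteq> E_H H1 `` B"
      using c[of A B] by blast
    have "(finite B \<and> A \<noteq> {}) \<or> infinite A" using ne fA by blast
    then obtain H2 where H2: "finite H2" "id \<in> H2" "\<forall>h\<in>H2. bij h" "B \<subseteq> E_H H2 `` A"
      using c[of B A] by blast
    have "E_H (H1 \<union> H2) \<in> perm_coarse" unfolding perm_coarse_def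
      using H1 H2 by (intro CollectI exI[of _ "H1 \<union> H2"]) auto
    moreover have "A \<subseteq> E_H (H1 \<union> H2) `` B" "B \<subseteq> E_H (H1 \<union> H2) `` A"
    proof -
      have "E_H H1 `` B \<subseteq> E_H (H1 \<union> H2) `` B" "E_H H2 `` A \<subseteq> E_H (H1 \<union> H2) `` A"
        using E_H_mono[of H1 "H1 \<union> H2"] E_H_mono[of H2 "H1 \<union> H2"] by (simp_all add: Image_mono)
      then show "A \<subseteq> E_H (H1 \<union> H2) `` B" "B \<subseteq> E_H (H1 \<union> H2) `` A"
        using H1(4) H2(4) by (meson order_trans)+
    qed
    ultimately show ?thesis unfolding ball_delta_def by blast
  qed
qed

lemma delta_eq: "ball_delta perm_coarse = ball_delta M_omega"
proof (intro ext iffI)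
  fix A B assume "ball_delta perm_coarse A B"
  then show "ball_delta M_omega A B" using perm_sub_M unfolding ball_delta_def by blast
next
  fix A B assume "ball_delta M_omega A B"
  then show "ball_delta perm_coarse A B" by (rule delta_M_perm)
qed

theorem mainTheorem11:
  shows "so perm_coarse = so M_omega
    \<and> ball_delta perm_coarse = ball_delta M_omega
    \<and> perm_coarse \<noteq> M_omega
    \<and> (\<forall>Y. ball_bounded perm_coarse Y \<longleftrightarrow> finite Y)
    \<and> (\<forall>Y. ball_bounded M_omega Y \<longleftrightarrow> finite Y)"
  using so_eq delta_eq perm_neq_M perm_bounded M_bounded by blast

end
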